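(* Let $?:[0,\infty]\to[0,2]$ be the Minkowski question mark function. Then $$f(t)=\int_0^1 e^{ixt}\,d?(x)\to 0\quad\text{as } |t|\to\infty$$ if and only if the two limit equalities $$\lim_{t\to+\infty} t\int_0^\infty ?\!\left(\tfrac1x\right)\sin(xt)\,dx=2,\qquad \lim_{t\to+\infty} t\int_0^\infty ?\!\left(\tfrac1x\right)\cos(xt)\,dx=0$$ hold simultaneously.
   Context: The Minkowski question mark function is defined on $[0,1]$ by $?(0)=0$, $?(1)=1$ and, for $x=[0;a_1,a_2,a_3,\dots]$ written as a regular continued fraction (finite for rational $x$, in which case the sum is finite), $?(x)=2\sum_{i\ge1}(-1)^{i+1}2^{-(a_1+\cdots+a_i)}$. It is continuous, strictly increasing and singular. It is extended to $[0,\infty]$ by the functional equation $?(x)+?(1/x)=2$ for $x>0$, with $?(\infty)=2$; thus $?(1/x)$ takes the value $2$ at $x=0$. *)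

theory Defs
  imports "HOL-Analysis.Analysis"
begin

text \<open>Gauss map: x maps to the fractional part of 1/x (with 1/0 = 0 in HOL, so 0 is fixed).\<close>
definition gauss_map :: "real \<Rightarrow> real" where
  "gauss_map x = frac (1 / x)"

definition cf_rem :: "real \<Rightarrow> nat \<Rightarrow> real" where
  "cf_rem x n = (gauss_map ^^ n) x"

text \<open>Partial quotient a_(n+1) = floor (1 / x_n) (meaningful while x_n is nonzero).\<close>
definition cf_digit :: "real \<Rightarrow> nat \<Rightarrow> real" where
  "cf_digit x n = of_int \<lfloor>1 / cf_rem x n\<rfloor>"

text \<open>The (i+1)-th term (-1)^i * 2^(-(a_1+...+a_(i+1))), present only while the
  expansion has not terminated (i.e. x_i is nonzero).\<close>
definition minkowski_term :: "real \<Rightarrow> nat \<Rightarrow> real" where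
  "minkowski_term x i =
     (if cf_rem x i = 0 then 0
      else (-1) ^ i * 2 powr (- (\<Sum>j\<le>i. cf_digit x j)))"

definition minkowski01 :: "real \<Rightarrow> real" where
  "minkowski01 x =
     (if x = 0 then 0 else if x = 1 then 1 else 2 * (\<Sum>i. minkowski_term x i))"

text \<open>Extension to [0,infinity) via ?(x) + ?(1/x) = 2.\<close>
definition minkowski :: "real \<Rightarrow> real" where
  "minkowski x = (if x \<le> 1 then minkowski01 x else 2 - minkowski01 (1 / x))"

text \<open>The function x maps to ?(1/x) on [0,infinity), with value ?(infinity) = 2 at x = 0.\<close>
definition minkowski_inv :: "real \<Rightarrow> real" where
  "minkowski_inv x = (if x = 0 then 2 else minkowski (1 / x))"

text \<open>Distribution function of the measure d? on [0,1] (0 left of 0, 1 right of 1).\<close>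
definition minkowski_cdf :: "real \<Rightarrow> real" where
  "minkowski_cdf x = (if x \<le> 0 then 0 else if 1 \<le> x then 1 else minkowski01 x)"

definition minkowski_fourier :: "real \<Rightarrow> complex" where
  "minkowski_fourier t =
     (LINT x:{0..1}|interval_measure minkowski_cdf. cis (x * t))"

end

theory Submission
  imports Defs
begin


lemma gauss_zero[simp]: "gauss_map 0 = 0"
  by (simp add: gauss_map_def)

lemma cf_rem_0[simp]: "cf_rem x 0 = x"
  by (simp add: cf_rem_def)

lemma cf_rem_Suc: "cf_rem x (Suc i) = gauss_map (cf_rem x i)"
  by (simp add: cf_rem_def)

lemma cf_rem_Suc': "cf_rem x (Suc i) = cf_rem (gauss_map x) i"
  by (simp add: cf_rem_def funpow_Suc_right del: funpow.simps)

lemma cf_rem_of_zero[simp]: "cf_rem 0 i = 0"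
  by (induction i) (simp_all add: cf_rem_Suc)

lemma cf_rem_range: "0 \<le> x \<Longrightarrow> x \<le> 1 \<Longrightarrow> 0 \<le> cf_rem x i \<and> cf_rem x i \<le> 1"
proof (induction i)
  case (Suc i)
  then show ?case unfolding cf_rem_Suc gauss_map_def
    using frac_ge_0 frac_lt_1 less_imp_le by blast
qed simp

lemma cf_rem_zero_mono: "cf_rem x i = 0 \<Longrightarrow> i \<le> j \<Longrightarrow> cf_rem x j = 0"
proof (induction j)
  case (Suc j)
  then show ?case by (cases "i = Suc j") (auto simp: cf_rem_Suc)
qed simp

lemma digit_ge1:
  assumes "0 \<le> x" "x \<le> 1" "cf_rem x j \<noteq> 0"
  shows "cf_digit x j \<ge> 1"
proof -
  have r: "0 < cf_rem x j" "cf_rem x j \<le> 1" using cf_rem_range[OF assms(1,2), of j] assms(3) by auto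
  then have "1 \<le> 1 / cf_rem x j" by simp
  then have "1 \<le> \<lfloor>1 / cf_rem x j\<rfloor>" by (simp add: le_floor_iff)
  then show ?thesis unfolding cf_digit_def by simp
qed

lemma term_bound:
  assumes "0 \<le> x" "x \<le> 1"
  shows "\<bar>minkowski_term x i\<bar> \<le> (1/2)^(Suc i)"
proof (cases "cf_rem x i = 0")
  case True then show ?thesis by (simp add: minkowski_term_def)
next
  case False
  have "\<forall>j\<le>i. cf_digit x j \<ge> 1"
    using digit_ge1[OF assms] cf_rem_zero_mono False by blast
  then have "(\<Sum>j\<le>i. (1::real)) \<le> (\<Sum>j\<le>i. cf_digit x j)" by (intro sum_mono) auto
  then have S: "real (Suc i) \<le> (\<Sum>j\<le>i. cf_digit x j)" by simp
  have "\<bar>minkowski_term x i\<bar> = 2 powr (- (\<Sum>j\<le>i. cf_digit x j))"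
    using False by (simp add: minkowski_term_def abs_mult)
  also have "\<dots> \<le> 2 powr (- real (Suc i))" using S by (intro powr_mono) auto
  also have "\<dots> = (1/2)^(Suc i)"
  proof -
    have "2 powr real (Suc i) = (2::real)^Suc i" by (rule powr_realpow) simp
    then show ?thesis by (simp only: powr_minus_divide power_one_over)
  qed
  finally show ?thesis .
qed

lemma summable_term:
  assumes "0 \<le> x" "x \<le> 1"
  shows "summable (minkowski_term x)"
proof (rule summable_comparison_test)
  show "\<exists>N. \<forall>n\<ge>N. norm (minkowski_term x n) \<le> (1/2)^(Suc n)"
    using term_bound[OF assms] by auto
  show "summable (\<lambda>n. (1/2::real)^(Suc n))"
    using summable_geometric[of "1/2::real"] by (simp add: summable_mult)
qed

lemma abs_suminf_term:
  assumes "0 \<le> x" "x \<le> 1"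
  shows "\<bar>suminf (minkowski_term x)\<bar> \<le> 1"
proof -
  have g: "(\<lambda>n. (1/2::real)^(Suc n)) sums 1"
    using geometric_sums[of "1/2::real"] sums_mult[of "\<lambda>n. (1/2::real)^n" 2 "1/2"] by simp
  have g2: "(\<lambda>n. (-1) * (1/2::real)^(Suc n)) sums (-1)"
    using sums_mult[OF g, of "-1"] by simp
  have s: "summable (minkowski_term x)" using summable_term[OF assms] .
  have "suminf (minkowski_term x) \<le> 1"
  proof (rule sums_le[OF _ summable_sums[OF s] g])
    show "minkowski_term x n \<le> (1/2)^(Suc n)" for n using term_bound[OF assms, of n] by linarith
  qed
  moreover have "-1 \<le> suminf (minkowski_term x)"
  proof (rule sums_le[OF _ g2 summable_sums[OF s]])
    show "(-1) * (1/2::real)^(Suc n) \<le> minkowski_term x n" for n using term_bound[OF assms, of n] by linarith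
  qed
  ultimately show ?thesis by linarith
qed



lemma pow2_neg: "(2::real) powr (- real n) = (1/2)^n"
proof -
  have "2 powr real n = (2::real)^n" by (rule powr_realpow) simp
  then show ?thesis by (simp only: powr_minus_divide power_one_over)
qed

lemma m_eq_sum:
  assumes "0 \<le> x" "x < 1"
  shows "minkowski01 x = 2 * suminf (minkowski_term x)"
proof (cases "x = 0")
  case True
  then have "minkowski_term x = (\<lambda>_. 0)" by (auto simp: minkowski_term_def)
  then show ?thesis using True by (simp add: minkowski01_def)
qed (use assms in \<open>simp add: minkowski01_def\<close>)

lemma key:
  assumes n: "n \<ge> 1" and x: "0 \<le> x" "x < 1"
  shows "minkowski01 (1 / (real n + x)) = (1/2)^n * (2 - minkowski01 x)"
proof -
  define y where "y = 1 / (real n + x)"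
  have npos: "real n + x \<ge> 1" using n x by simp
  have y0: "y \<noteq> 0" "0 \<le> y" "y \<le> 1" using npos by (auto simp: y_def)
  have fr: "frac (real n + x) = x" using x by (simp add: frac_unique_iff)
  have gy: "gauss_map y = x" using fr npos by (simp add: gauss_map_def y_def)
  have rem: "cf_rem y (Suc i) = cf_rem x i" for i by (simp add: cf_rem_Suc' gy)
  have fl: "\<lfloor>real n + x\<rfloor> = int n" using x by (simp add: floor_eq_iff)
  have dig0: "cf_digit y 0 = real n" using fl npos by (simp add: cf_digit_def y_def)
  have digS: "cf_digit y (Suc i) = cf_digit x i" for i by (simp add: cf_digit_def rem)
  have sumS: "(\<Sum>j\<le>Suc i. cf_digit y j) = real n + (\<Sum>j\<le>i. cf_digit x j)" for i
    unfolding sum.atMost_Suc_shift digS dig0 by simp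
  have t0: "minkowski_term y 0 = (1/2)^n"
    using y0 by (simp add: minkowski_term_def dig0 pow2_neg)
  have tS: "minkowski_term y (Suc i) = (-1) * (1/2)^n * minkowski_term x i" for i
  proof (cases "cf_rem x i = 0")
    case True then show ?thesis by (simp add: minkowski_term_def rem)
  next
    case False
    have "2 powr (- (real n + (\<Sum>j\<le>i. cf_digit x j))) = (1/2)^n * 2 powr (- (\<Sum>j\<le>i. cf_digit x j))"
      by (metis minus_add_distrib powr_add pow2_neg)
    then show ?thesis using False by (simp add: minkowski_term_def rem sumS del: sum.atMost_Suc)
  qed
  have sx: "summable (minkowski_term x)" using summable_term x by simp
  have sy: "summable (minkowski_term y)" using summable_term y0 by simp
  have "suminf (minkowski_term y) = minkowski_term y 0 + (\<Sum>i. minkowski_term y (Suc i))"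
    using suminf_split_head[OF sy] by simp
  also have "\<dots> = (1/2)^n - (1/2)^n * suminf (minkowski_term x)"
    unfolding t0 tS using suminf_mult[OF sx, of "(-1) * (1/2)^n"] by simp
  finally have S: "suminf (minkowski_term y) = (1/2)^n - (1/2)^n * suminf (minkowski_term x)" .
  show ?thesis
  proof (cases "y = 1")
    case True
    then have "real n + x = 1" by (simp add: y_def)
    then have "n = 1" "x = 0" using n x by linarith+
    then show ?thesis using True by (simp add: y_def minkowski01_def)
  next
    case False
    then have "minkowski01 y = 2 * suminf (minkowski_term y)" using y0 by (simp add: minkowski01_def)
    then show ?thesis unfolding y_def[symmetric] using S m_eq_sum[OF x] by (simp add: algebra_simps)
  qed
qed

lemma m0[simp]: "minkowski01 0 = 0" and m1[simp]: "minkowski01 1 = 1"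
  by (simp_all add: minkowski01_def)

lemma key_full:
  assumes n: "n \<ge> 1" and x: "0 \<le> x" "x \<le> 1"
  shows "minkowski01 (1 / (real n + x)) = (1/2)^n * (2 - minkowski01 x)"
proof (cases "x = 1")
  case True
  have "minkowski01 (1 / (real (Suc n) + 0)) = (1/2)^(Suc n) * (2 - minkowski01 0)"
    by (rule key) auto
  then show ?thesis using True by (simp add: add.commute)
qed (use key assms in auto)

lemma rep:
  assumes "0 < x" "x < 1"
  obtains n r where "n \<ge> 1" "0 \<le> r" "r < 1" "x = 1 / (real n + r)"
proof -
  define n where "n = nat \<lfloor>1/x\<rfloor>"
  define r where "r = 1/x - real n"
  have "1 < 1/x" using assms by simp
  then have f: "1 \<le> \<lfloor>1/x\<rfloor>" by (simp add: le_floor_iff)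
  then have f0: "0 \<le> \<lfloor>1/x\<rfloor>" by linarith
  then have nn: "real n = of_int \<lfloor>1/x\<rfloor>" unfolding n_def by (rule of_nat_nat)
  have "n \<ge> 1" using f n_def by linarith
  moreover have "0 \<le> r" "r < 1" unfolding r_def nn by linarith+
  moreover have "x = 1 / (real n + r)" using assms by (simp add: r_def)
  ultimately show ?thesis using that by blast
qed

lemma m_bounds_aux:
  "\<forall>x. 0 \<le> x \<and> x \<le> 1 \<longrightarrow> - 2 / 2^k \<le> minkowski01 x \<and> minkowski01 x \<le> 1 + 2 / 2^k"
proof (induction k)
  case 0
  show ?case
  proof (intro allI impI)
    fix x :: real assume x: "0 \<le> x \<and> x \<le> 1"
    show "- 2 / 2^0 \<le> minkowski01 x \<and> minkowski01 x \<le> 1 + 2 / 2^0"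
      using abs_suminf_term[of x] x by (auto simp: minkowski01_def)
  qed
next
  case (Suc k)
  define e :: real where "e = 2 / 2^k"
  have e: "e \<ge> 0" by (simp add: e_def)
  show ?case
  proof (intro allI impI)
    fix x :: real assume x: "0 \<le> x \<and> x \<le> 1"
    show "- 2 / 2^Suc k \<le> minkowski01 x \<and> minkowski01 x \<le> 1 + 2 / 2^Suc k"
    proof (cases "x = 0 \<or> x = 1")
      case True
      have h: "-1 \<le> 1 / (2::real)^k" by (smt (verit) zero_le_divide_1_iff zero_le_numeral zero_le_power)
      have h2: "0 \<le> 2 / (2::real)^Suc k" by simp
      from True show ?thesis
      proof
        assume "x = 0" then show ?thesis using h2 by simp
      next
        assume "x = 1" then show ?thesis using h h2 by simp
      qed
    next
      case False
      then obtain n r where nr: "n \<ge> 1" "0 \<le> r" "r < 1" "x = 1 / (real n + r)"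
        using rep[of x] x by force
      have mx: "minkowski01 x = (1/2)^n * (2 - minkowski01 r)" using key nr by simp
      have IH: "- e \<le> minkowski01 r" "minkowski01 r \<le> 1 + e" using Suc.IH nr unfolding e_def by auto
      define p :: real where "p = (1/2)^n"
      have p: "0 < p" "p \<le> 1/2" unfolding p_def using nr power_decreasing[of 1 n "1/2::real"] by auto
      have "p * (2 - minkowski01 r) \<ge> - e / 2"
      proof -
        have "p * (2 - minkowski01 r) \<ge> p * (1 - e)" using IH p by (intro mult_left_mono) auto
        moreover have "p * (1 - e) \<ge> - e / 2"
        proof -
          have "p*e \<le> e/2" using mult_right_mono[OF p(2) e] by simp
          moreover have "p*(1-e) = p - p*e" by (simp add: algebra_simps)
          ultimately show ?thesis using p by linarith
        qed
        ultimately show ?thesis by linarith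
      qed
      moreover have "p * (2 - minkowski01 r) \<le> 1 + e / 2"
      proof -
        have "p * (2 - minkowski01 r) \<le> p * (2 + e)" using IH p by (intro mult_left_mono) auto
        moreover have "p * (2 + e) \<le> 1 + e / 2"
        proof -
          have "p*e \<le> e/2" using mult_right_mono[OF p(2) e] by simp
          moreover have "p*(2+e) = 2*p + p*e" by (simp add: algebra_simps)
          ultimately show ?thesis using p by linarith
        qed
        ultimately show ?thesis by linarith
      qed
      ultimately show ?thesis using mx unfolding p_def e_def by auto
    qed
  qed
qed

lemma m_bounds:
  assumes "0 \<le> x" "x \<le> 1"
  shows "0 \<le> minkowski01 x" "minkowski01 x \<le> 1"
proof -
  have b: "- 2 / 2^k \<le> minkowski01 x \<and> minkowski01 x \<le> 1 + 2 / 2^k" for k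
    using m_bounds_aux assms by blast
  have t: "(\<lambda>k. 2 / (2::real)^k) \<longlonglongrightarrow> 0"
    by (intro LIMSEQ_divide_realpow_zero) auto
  show "0 \<le> minkowski01 x"
  proof (rule tendsto_le[OF _ tendsto_const _ ])
    show "((\<lambda>k. - (2 / (2::real)^k)) \<longlongrightarrow> 0) sequentially" using tendsto_minus[OF t] by simp
  qed (use b in auto)
  show "minkowski01 x \<le> 1"
  proof (rule tendsto_le[OF _ _ tendsto_const])
    show "((\<lambda>k. 1 + (2 / (2::real)^k)) \<longlongrightarrow> 1) sequentially" using tendsto_add[OF tendsto_const t, of 1] by simp
  qed (use b in auto)
qed



lemma m_inv_nat:
  assumes "N \<ge> 1" shows "minkowski01 (1 / real N) = 2 * (1/2)^N"
  using key_full[OF assms, of 0] by simp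

lemma pow_half_le: "n \<ge> 1 \<Longrightarrow> (1/2::real)^n \<le> 1/2"
  using power_decreasing[of 1 n "1/2::real"] by simp

lemma mono_aux:
  "\<forall>x y. 0 \<le> x \<and> x < y \<and> y \<le> 1 \<longrightarrow> minkowski01 x \<le> minkowski01 y + 1 / 2^k"
proof (induction k)
  case 0
  show ?case
  proof (intro allI impI)
    fix x y :: real assume "0 \<le> x \<and> x < y \<and> y \<le> 1"
    then have "minkowski01 x \<le> 1" "0 \<le> minkowski01 y" using m_bounds by auto
    then show "minkowski01 x \<le> minkowski01 y + 1 / 2^0" by simp
  qed
next
  case (Suc k)
  show ?case
  proof (intro allI impI)
    fix x y :: real assume xy: "0 \<le> x \<and> x < y \<and> y \<le> 1"
    have pk: "0 \<le> 1 / (2::real)^Suc k" by simp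
    show "minkowski01 x \<le> minkowski01 y + 1 / 2^Suc k"
    proof (cases "x = 0 \<or> y = 1")
      case True
      from True show ?thesis
      proof
        assume "x = 0"
        have "0 \<le> minkowski01 y" using m_bounds(1)[of y] xy by auto
        then show ?thesis using \<open>x = 0\<close> pk by simp
      next
        assume "y = 1"
        have "minkowski01 x \<le> 1" using m_bounds(2)[of x] xy by auto
        then show ?thesis using \<open>y = 1\<close> pk by (simp only: m1)
      qed
    next
      case False
      then have x01: "0 < x" "x < 1" and y01: "0 < y" "y < 1" using xy by auto
      obtain nx rx where x: "nx \<ge> 1" "0 \<le> rx" "rx < 1" "x = 1 / (real nx + rx)"
        using rep[OF x01] by blast
      obtain ny ry where y: "ny \<ge> 1" "0 \<le> ry" "ry < 1" "y = 1 / (real ny + ry)"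
        using rep[OF y01] by blast
      have A: "0 < real nx + rx" "0 < real ny + ry" using x y by auto
      have "inverse (real nx + rx) < inverse (real ny + ry)" using xy x(4) y(4) by (simp add: inverse_eq_divide)
      then have lt: "real ny + ry < real nx + rx" using inverse_less_iff_less[OF A] by blast
      have mx: "minkowski01 x = (1/2)^nx * (2 - minkowski01 rx)" using key x by simp
      have my: "minkowski01 y = (1/2)^ny * (2 - minkowski01 ry)" using key y by simp
      have bx: "0 \<le> minkowski01 rx" "minkowski01 rx \<le> 1" using m_bounds x by auto
      have by': "0 \<le> minkowski01 ry" "minkowski01 ry \<le> 1" using m_bounds y by auto
      have "ny \<le> nx"
      proof (rule ccontr)
        assume "\<not> ny \<le> nx"
        then have "real nx + 1 \<le> real ny" by simp
        then show False using lt x y by linarith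
      qed
      show ?thesis
      proof (cases "ny < nx")
        case True
        then have "(1/2::real)^nx \<le> (1/2)^(Suc ny)" by (intro power_decreasing) auto
        then have "2 * (1/2::real)^nx \<le> (1/2)^ny" by simp
        moreover have "minkowski01 x \<le> 2 * (1/2)^nx" unfolding mx using bx by (simp add: mult_left_le)
        moreover have "(1/2)^ny \<le> minkowski01 y" unfolding my using by' by (simp add: mult_le_cancel_left1)
        ultimately show ?thesis using pk by linarith
      next
        case False
        then have n: "nx = ny" using \<open>ny \<le> nx\<close> by simp
        then have "ry < rx" using lt by simp
        then have IH: "minkowski01 ry \<le> minkowski01 rx + 1/2^k" using Suc.IH y x by auto
        define p :: real where "p = (1/2)^nx"
        have p: "0 < p" "p \<le> 1/2" unfolding p_def using pow_half_le x by auto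
        have "minkowski01 x = p * (2 - minkowski01 rx)" using mx p_def by simp
        also have "\<dots> \<le> p * (2 - minkowski01 ry + 1/2^k)" using IH p by (intro mult_left_mono) auto
        also have "\<dots> = minkowski01 y + p * (1/2^k)" using my n p_def by (simp add: algebra_simps)
        also have "p * (1/2^k) \<le> 1/2 * (1/2^k)" using p by (intro mult_right_mono) auto
        finally show ?thesis by simp
      qed
    qed
  qed
qed

lemma small_pow: "0 < e \<Longrightarrow> \<exists>k. 1 / (2::real)^k < e"
  using real_arch_pow_inv[of e "1/2::real"] by (auto simp: power_one_over)

lemma m_mono:
  assumes "0 \<le> x" "x \<le> y" "y \<le> 1"
  shows "minkowski01 x \<le> minkowski01 y"
proof (rule ccontr)
  assume "\<not> ?thesis"
  then obtain k where k: "1 / (2::real)^k < minkowski01 x - minkowski01 y"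
    using small_pow[of "minkowski01 x - minkowski01 y"] by auto
  then have "x < y" using assms by (cases "x = y") auto
  then show False using mono_aux[of k] assms k by force
qed



lemma inv_lt: "0 < b \<Longrightarrow> b < a \<Longrightarrow> 1/a < 1/(b::real)"
  by (rule divide_strict_left_mono) auto

lemma RL_aux:
  "(\<forall>x. 0 \<le> x \<and> x < 1 \<longrightarrow> (\<exists>y. x < y \<and> y \<le> 1 \<and> minkowski01 y \<le> minkowski01 x + 1/2^k)) \<and>
   (\<forall>x. 0 < x \<and> x \<le> 1 \<longrightarrow> (\<exists>y. 0 \<le> y \<and> y < x \<and> minkowski01 x \<le> minkowski01 y + 1/2^k))"
proof (induction k)
  case 0
  show ?case
  proof (intro conjI allI impI)
    fix x :: real assume "0 \<le> x \<and> x < 1"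
    then show "\<exists>y. x < y \<and> y \<le> 1 \<and> minkowski01 y \<le> minkowski01 x + 1/2^0"
      using m_bounds[of x] by (intro exI[of _ 1]) auto
  next
    fix x :: real assume "0 < x \<and> x \<le> 1"
    then show "\<exists>y. 0 \<le> y \<and> y < x \<and> minkowski01 x \<le> minkowski01 y + 1/2^0"
      using m_bounds[of x] by (intro exI[of _ 0]) auto
  qed
next
  case (Suc k)
  note R = Suc.IH[THEN conjunct1, rule_format]
  note L = Suc.IH[THEN conjunct2, rule_format]
  have N: "minkowski01 (1 / real (k+2)) = 1/2^Suc k"
    using m_inv_nat[of "k+2"] by (simp add: power_one_over)
  show ?case
  proof (intro conjI allI impI)
    fix x :: real assume x: "0 \<le> x \<and> x < 1"
    show "\<exists>y. x < y \<and> y \<le> 1 \<and> minkowski01 y \<le> minkowski01 x + 1/2^Suc k"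
    proof (cases "x = 0")
      case True
      then show ?thesis using N by (intro exI[of _ "1 / real (k+2)"]) auto
    next
      case False
      then have "0 < x" "x < 1" using x by auto
      then obtain n r where nr: "n \<ge> 1" "0 \<le> r" "r < 1" "x = 1 / (real n + r)"
        using rep by blast
      define p :: real where "p = (1/2)^n"
      have p: "0 < p" "p \<le> 1/2" unfolding p_def using pow_half_le nr by auto
      have mx: "minkowski01 x = p * (2 - minkowski01 r)" using key nr p_def by simp
      show ?thesis
      proof (cases "r = 0")
        case False
        then obtain r' where r': "0 \<le> r'" "r' < r" "minkowski01 r \<le> minkowski01 r' + 1/2^k"
          using L[of r] nr False by auto
        define y where "y = 1 / (real n + r')"
        have my: "minkowski01 y = p * (2 - minkowski01 r')" using key nr r' p_def y_def by simp
        have "x < y" unfolding y_def nr(4) using nr r' by (intro inv_lt) auto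
        moreover have "y \<le> 1" using nr r' unfolding y_def by simp
        moreover have "minkowski01 y \<le> minkowski01 x + 1/2^Suc k"
        proof -
          have "minkowski01 y \<le> p * (2 - minkowski01 r + 1/2^k)"
            unfolding my using r' p by (intro mult_left_mono) auto
          also have "\<dots> = minkowski01 x + p * (1/2^k)" using mx by (simp add: algebra_simps)
          also have "p * (1/2^k) \<le> 1/2 * (1/2^k)" using p by (intro mult_right_mono) auto
          finally show ?thesis by simp
        qed
        ultimately show ?thesis by blast
      next
        case True
        have "n \<noteq> 1" using True nr x by auto
        then have n2: "n - 1 \<ge> 1" using nr by simp
        obtain r' where r': "0 \<le> r'" "r' < 1" "minkowski01 1 \<le> minkowski01 r' + 1/2^k"
          using L[of 1] by auto
        define q :: real where "q = (1/2)^(n-1)"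
        have q: "0 < q" "q \<le> 1/2" unfolding q_def using pow_half_le n2 by auto
        have pq: "p = q / 2" unfolding p_def q_def using nr by (cases n) auto
        define y where "y = 1 / (real (n-1) + r')"
        have my: "minkowski01 y = q * (2 - minkowski01 r')" using key[OF n2 r'(1,2)] q_def y_def by simp
        have rn: "real (n-1) = real n - 1" using nr by simp
        have "x < y" unfolding y_def nr(4) rn using nr r' True n2 by (intro inv_lt) auto
        moreover have "y \<le> 1" using n2 r' unfolding y_def by simp
        moreover have "minkowski01 y \<le> minkowski01 x + 1/2^Suc k"
        proof -
          have "minkowski01 y \<le> q * (1 + 1/2^k)"
            unfolding my using r' q by (intro mult_left_mono) auto
          also have "\<dots> = minkowski01 x + q * (1/2^k)" using mx True pq by (simp add: algebra_simps)
          also have "q * (1/2^k) \<le> 1/2 * (1/2^k)" using q by (intro mult_right_mono) auto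
          finally show ?thesis by simp
        qed
        ultimately show ?thesis by blast
      qed
    qed
  next
    fix x :: real assume x: "0 < x \<and> x \<le> 1"
    show "\<exists>y. 0 \<le> y \<and> y < x \<and> minkowski01 x \<le> minkowski01 y + 1/2^Suc k"
    proof (cases "x = 1")
      case True
      define y where "y = 1 / (real 1 + 1 / real (k+2))"
      have my: "minkowski01 y = (1/2) * (2 - 1/2^Suc k)"
        using key_full[of 1 "1 / real (k+2)"] N y_def by simp
      have "y < 1/1" unfolding y_def by (rule inv_lt) auto
      then have "0 \<le> y" "y < x" using True by (auto simp: y_def)
      moreover have "minkowski01 x \<le> minkowski01 y + 1/2^Suc k"
      proof -
        have gen: "\<And>t::real. 0 \<le> t \<Longrightarrow> 1 \<le> 1/2*(2-t)+t" by (simp add: field_simps)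
        show ?thesis unfolding True m1 my by (rule gen) simp
      qed
      ultimately show ?thesis by blast
    next
      case False
      then have "0 < x" "x < 1" using x by auto
      then obtain n r where nr: "n \<ge> 1" "0 \<le> r" "r < 1" "x = 1 / (real n + r)"
        using rep by blast
      define p :: real where "p = (1/2)^n"
      have p: "0 < p" "p \<le> 1/2" unfolding p_def using pow_half_le nr by auto
      have mx: "minkowski01 x = p * (2 - minkowski01 r)" using key nr p_def by simp
      obtain r' where r': "r < r'" "r' \<le> 1" "minkowski01 r' \<le> minkowski01 r + 1/2^k"
        using R[of r] nr by auto
      define y where "y = 1 / (real n + r')"
      have my: "minkowski01 y = p * (2 - minkowski01 r')" using key_full nr r' p_def y_def by simp
      have "y < x" unfolding y_def nr(4) using nr r' by (intro inv_lt) auto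
      moreover have "0 \<le> y" using nr r' unfolding y_def by simp
      moreover have "minkowski01 x \<le> minkowski01 y + 1/2^Suc k"
      proof -
        have "p * (2 - minkowski01 r - 1/2^k) \<le> minkowski01 y"
          unfolding my using r' p by (intro mult_left_mono) auto
        moreover have "p * (2 - minkowski01 r - 1/2^k) = minkowski01 x - p * (1/2^k)" using mx by (simp add: algebra_simps)
        moreover have "p * (1/2^k) \<le> 1/2 * (1/2^k)" using p by (intro mult_right_mono) auto
        ultimately show ?thesis by simp
      qed
      ultimately show ?thesis by blast
    qed
  qed
qed



abbreviation "F \<equiv> minkowski_cdf"
abbreviation "\<mu> \<equiv> interval_measure minkowski_cdf"

lemma cdf_eq: "0 \<le> x \<Longrightarrow> x \<le> 1 \<Longrightarrow> F x = minkowski01 x"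
  by (auto simp: minkowski_cdf_def)

lemma cdf_mono: "x \<le> y \<Longrightarrow> F x \<le> F y"
  unfolding minkowski_cdf_def
  using m_bounds m_mono by (smt (verit))

lemma cdf_bounds: "0 \<le> F x" "F x \<le> 1"
  unfolding minkowski_cdf_def using m_bounds by auto

lemma cdf_right_cont: "continuous (at_right a) F"
  unfolding continuous_within order_tendsto_iff
proof (intro conjI allI impI)
  fix l assume "l < F a"
  show "\<forall>\<^sub>F x in at_right a. l < F x"
  proof (rule eventually_mono[OF eventually_at_right_less[of a]])
    fix x assume "a < x"
    then show "l < F x" using \<open>l < F a\<close> cdf_mono[of a x] by linarith
  qed
next
  fix u assume u: "F a < u"
  show "\<forall>\<^sub>F x in at_right a. F x < u"
  proof (cases "a < 0")
    case True
    have "\<forall>y>a. y < 0 \<longrightarrow> F y < u" using u True by (auto simp: minkowski_cdf_def)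
    then show ?thesis using True by (subst eventually_at_right[of _ 0]) auto
  next
    case False
    show ?thesis
    proof (cases "a \<ge> 1")
      case True
      have "\<forall>y>a. y < a + 1 \<longrightarrow> F y < u" using u True by (auto simp: minkowski_cdf_def)
      then show ?thesis by (subst eventually_at_right[of _ "a+1"]) (auto intro!: exI[of _ "a+1"])
    next
      case False2: False
      then have a: "0 \<le> a" "a < 1" using False by auto
      obtain k where k: "1 / (2::real)^k < u - F a" using small_pow[of "u - F a"] u by auto
      obtain y where y: "a < y" "y \<le> 1" "minkowski01 y \<le> minkowski01 a + 1/2^k"
        using RL_aux[of k] a by blast
      have Fy: "F y < u" using y k a cdf_eq[of y] cdf_eq[of a] by auto
      have "\<forall>z>a. z < y \<longrightarrow> F z < u" using Fy cdf_mono by (meson less_imp_le le_less_trans)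
      then show ?thesis using y by (subst eventually_at_right[of _ y]) auto
    qed
  qed
qed

lemma mu_Ioc: "a \<le> b \<Longrightarrow> emeasure \<mu> {a<..b} = F b - F a"
  by (rule emeasure_interval_measure_Ioc) (auto intro: cdf_mono cdf_right_cont)

lemma mu_Ioc_real: "a \<le> b \<Longrightarrow> measure \<mu> {a<..b} = F b - F a"
  by (rule measure_interval_measure_Ioc) (auto intro: cdf_mono cdf_right_cont)

lemma sigma_finite_mu: "sigma_finite_measure \<mu>"
  by (rule sigma_finite_interval_measure) (auto intro: cdf_mono cdf_right_cont)

lemma mu_zero: "emeasure \<mu> {0} = 0"
proof -
  have "emeasure \<mu> {0} \<le> emeasure \<mu> {-1<..0}" by (intro emeasure_mono) auto
  also have "\<dots> = 0" using mu_Ioc[of "-1" 0] by (simp add: minkowski_cdf_def)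
  finally show ?thesis by simp
qed

lemma mu_Icc01_fin: "emeasure \<mu> {0..1} < \<infinity>"
proof -
  have "emeasure \<mu> {0..1} \<le> emeasure \<mu> {-1<..1}" by (intro emeasure_mono) auto
  also have "\<dots> = ennreal (F 1 - F (-1))" using mu_Ioc[of "-1" 1] by simp
  also have "\<dots> < \<infinity>" by simp
  finally show ?thesis .
qed

lemma mu_Ioc_fin: "emeasure \<mu> {a<..b} < \<infinity>"
  by (cases "a \<le> b") (auto simp: mu_Ioc)

lemma mu_Ioc01: "measure \<mu> {0<..1} = 1"
  using mu_Ioc_real[of 0 1] by (simp add: minkowski_cdf_def)

lemma mu_tail: "0 \<le> x \<Longrightarrow> x \<le> 1 \<Longrightarrow> measure \<mu> {x<..1} = 1 - minkowski01 x"
  using mu_Ioc_real[of x 1] cdf_eq[of x] by (simp add: minkowski_cdf_def)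



lemma meas_cis[measurable]: "(\<lambda>x. cis (x * t)) \<in> borel_measurable borel"
  by (intro borel_measurable_continuous_onI continuous_intros)

lemma ftc_cis:
  assumes t: "t \<noteq> 0" and y: "0 \<le> y"
  shows "(LINT x:{0..<y}|lborel. cis (x * t)) = (cis (y * t) - 1) / (\<i> * of_real t)"
proof -
  have "(LBINT x=ereal 0..ereal y. cis (x * t)) = cis (y * t) / (\<i> * of_real t) - cis (0 * t) / (\<i> * of_real t)"
  proof (rule interval_integral_FTC_finite)
    show "continuous_on {min 0 y..max 0 y} (\<lambda>x. cis (x * t))" by (intro continuous_intros)
    fix x :: real
    have "((\<lambda>x. cis (x * t)) has_derivative (\<lambda>h. (h * t) *\<^sub>R (\<i> * cis (x * t)))) (at x within {min 0 y..max 0 y})"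
      by (intro has_derivative_cis derivative_intros)
    then have "((\<lambda>x. cis (x * t) / (\<i> * of_real t)) has_derivative (\<lambda>h. ((h * t) *\<^sub>R (\<i> * cis (x * t))) / (\<i> * of_real t))) (at x within {min 0 y..max 0 y})"
      by (rule bounded_linear.has_derivative[OF bounded_linear_divide])
    moreover have "(\<lambda>h. ((h * t) *\<^sub>R (\<i> * cis (x * t))) / (\<i> * of_real t)) = (\<lambda>h. h *\<^sub>R cis (x * t))"
      using t by (auto simp: scaleR_conv_of_real field_simps)
    ultimately show "((\<lambda>x. cis (x * t) / (\<i> * of_real t)) has_vector_derivative cis (x * t)) (at x within {min 0 y..max 0 y})"
      by (simp add: has_vector_derivative_def)
  qed
  also have "(LBINT x=ereal 0..ereal y. cis (x * t)) = (LINT x:{0..y}|lborel. cis (x * t))"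
    using y by (rule interval_integral_Icc)
  also have "(LINT x:{0..y}|lborel. cis (x * t)) = (LINT x:{0..<y}|lborel. cis (x * t))"
  proof (rule set_integral_cong_set)
    show "AE x in lborel. (x \<in> {0..<y}) = (x \<in> {0..y})"
      using AE_lborel_singleton[of y] by eventually_elim auto
  qed (auto simp: set_borel_measurable_def)
  finally show ?thesis by (simp add: diff_divide_distrib)
qed

lemma pair_sf: "pair_sigma_finite lborel \<mu>"
  unfolding pair_sigma_finite_def using sigma_finite_mu lborel.sigma_finite_measure_axioms by auto

lemma meas_F[measurable]: "F \<in> borel_measurable borel"
  by (rule borel_measurable_mono) (auto simp: mono_def cdf_mono)

lemma fourier_alt: "minkowski_fourier t = (LINT y:{0<..1}|\<mu>. cis (y * t))"
  unfolding minkowski_fourier_def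
proof (rule set_integral_cong_set)
  have "{0} \<in> null_sets \<mu>" using mu_zero by (intro null_setsI) auto
  then show "AE x in \<mu>. (x \<in> {0<..1}) = (x \<in> {0..1})"
    by (rule AE_I') auto
qed (auto simp: set_borel_measurable_def)



lemma fub:
  assumes t: "t \<noteq> 0"
  shows "(LINT x:{0..<1}|lborel. complex_of_real (1 - F x) * cis (x * t)) = (minkowski_fourier t - 1) / (\<i> * of_real t)"
proof -
  interpret P: pair_sigma_finite lborel \<mu> by (rule pair_sf)
  define c where "c = \<i> * complex_of_real t"
  define f where "f x y = (indicator {0..<1} x * indicator {x<..1} y :: real) *\<^sub>R cis (x * t)" for x y
  have f_alt: "case_prod f = (\<lambda>p. (if 0 \<le> fst p \<and> fst p < 1 \<and> fst p < snd p \<and> snd p \<le> 1 then 1 else 0::real) *\<^sub>R cis (fst p * t))"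
    by (auto simp: f_def fun_eq_iff indicator_def)
  have meas: "case_prod f \<in> borel_measurable ((lborel::real measure) \<Otimes>\<^sub>M \<mu>)" unfolding f_alt by measurable
  have int: "integrable ((lborel::real measure) \<Otimes>\<^sub>M \<mu>) (case_prod f)"
  proof (rule integrableI_bounded_set[where A="{0..1} \<times> {0..1}" and B=1])
    show "{0..1} \<times> {0..1} \<in> sets ((lborel::real measure) \<Otimes>\<^sub>M \<mu>)" using atLeastAtMost_borel[of "0::real" 1] by (intro pair_measureI) auto
    have "emeasure ((lborel::real measure) \<Otimes>\<^sub>M \<mu>) ({0..1} \<times> {0..1}) = emeasure lborel {0..1::real} * emeasure \<mu> {0..1}"
      by (rule sigma_finite_measure.emeasure_pair_measure_Times[OF sigma_finite_mu]) auto
    then show "emeasure ((lborel::real measure) \<Otimes>\<^sub>M \<mu>) ({0..1} \<times> {0..1}) < \<infinity>"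
      using mu_Icc01_fin by (simp add: ennreal_mult_less_top)
    show "case_prod f \<in> borel_measurable ((lborel::real measure) \<Otimes>\<^sub>M \<mu>)" by (rule meas)
    show "AE p in (lborel::real measure) \<Otimes>\<^sub>M \<mu>. p \<in> {0..1} \<times> {0..1} \<longrightarrow> norm (case_prod f p) \<le> 1"
      by (intro AE_I2) (auto simp: f_def indicator_def)
    show "AE p in (lborel::real measure) \<Otimes>\<^sub>M \<mu>. p \<notin> {0..1} \<times> {0..1} \<longrightarrow> case_prod f p = 0"
      by (intro AE_I2) (auto simp: f_def indicator_def)
  qed
  have fub: "(\<integral>y. (\<integral>x. f x y \<partial>lborel) \<partial>\<mu>) = (\<integral>x. (\<integral>y. f x y \<partial>\<mu>) \<partial>lborel)"
    by (rule P.Fubini_integral[OF int])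
  have inner_y: "(\<integral>y. f x y \<partial>\<mu>) = indicator {0..<1} x *\<^sub>R (complex_of_real (1 - F x) * cis (x * t))" for x
  proof (cases "0 \<le> x \<and> x < 1")
    case True
    have "(\<integral>y. f x y \<partial>\<mu>) = (\<integral>y. indicator {x<..1} y *\<^sub>R cis (x * t) \<partial>\<mu>)"
      unfolding f_def using True by simp
    also have "\<dots> = (\<integral>y. indicator {x<..1} y \<partial>\<mu>) *\<^sub>R cis (x * t)"
      by (rule integral_scaleR_left) (intro integrable_real_indicator mu_Ioc_fin, auto)
    also have "(\<integral>y. indicator {x<..1} y \<partial>\<mu>) = 1 - F x"
      using True mu_tail[of x] cdf_eq[of x] by (simp add: Bochner_Integration.integral_indicator)
    finally show ?thesis using True by (simp add: scaleR_conv_of_real)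
  next
    case False
    then show ?thesis by (simp add: f_def)
  qed
  have inner_x: "(\<integral>x. f x y \<partial>lborel) = indicator {0<..1} y *\<^sub>R ((cis (y * t) - 1) / c)" for y
  proof (cases "0 < y \<and> y \<le> 1")
    case True
    have "(\<lambda>x. f x y) = (\<lambda>x. indicator {0..<y} x *\<^sub>R cis (x * t))"
      using True by (auto simp: f_def fun_eq_iff indicator_def)
    then have "(\<integral>x. f x y \<partial>lborel) = (LINT x:{0..<y}|lborel. cis (x * t))"
      by (simp add: set_lebesgue_integral_def)
    also have "\<dots> = (cis (y * t) - 1) / c" unfolding c_def using True t by (intro ftc_cis) auto
    finally show ?thesis using True by simp
  next
    case False
    then have "(\<lambda>x. f x y) = (\<lambda>x. 0)" by (auto simp: f_def fun_eq_iff indicator_def)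
    then show ?thesis using False by simp
  qed
  have i1: "integrable \<mu> (\<lambda>y. indicator {0<..1} y *\<^sub>R cis (y * t))"
    using mu_Ioc_fin[of 0 1] by (intro integrableI_bounded_set_indicator[where B=1]) auto
  have i2: "integrable \<mu> (\<lambda>y. indicator {0<..1} y *\<^sub>R (1::complex))"
    using mu_Ioc_fin[of 0 1] by (intro integrableI_bounded_set_indicator[where B=1]) auto
  have e2: "(\<integral>y. indicator {0<..1} y *\<^sub>R (1::complex) \<partial>\<mu>) = 1"
  proof -
    have "(\<integral>y. indicator {0<..1} y *\<^sub>R (1::complex) \<partial>\<mu>) = (\<integral>y. indicator {0<..1} y \<partial>\<mu>) *\<^sub>R 1"
      by (rule integral_scaleR_left) (intro integrable_real_indicator mu_Ioc_fin, auto)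
    then show ?thesis using mu_Ioc01 by (simp add: Bochner_Integration.integral_indicator)
  qed
  have "(LINT x:{0..<1}|lborel. complex_of_real (1 - F x) * cis (x * t)) = (\<integral>x. (\<integral>y. f x y \<partial>\<mu>) \<partial>lborel)"
    unfolding set_lebesgue_integral_def inner_y ..
  also have "\<dots> = (\<integral>y. indicator {0<..1} y *\<^sub>R ((cis (y * t) - 1) / c) \<partial>\<mu>)"
    unfolding fub[symmetric] inner_x ..
  also have "\<dots> = (\<integral>y. (indicator {0<..1} y *\<^sub>R cis (y * t) - indicator {0<..1} y *\<^sub>R (1::complex)) / c \<partial>\<mu>)"
    by (intro Bochner_Integration.integral_cong) (auto simp: indicator_def)
  also have "\<dots> = ((\<integral>y. indicator {0<..1} y *\<^sub>R cis (y * t) \<partial>\<mu>) - (\<integral>y. indicator {0<..1} y *\<^sub>R (1::complex) \<partial>\<mu>)) / c"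
    using i1 i2 by simp
  also have "\<dots> = (minkowski_fourier t - 1) / c"
    unfolding e2 fourier_alt set_lebesgue_integral_def ..
  finally show ?thesis unfolding c_def .
qed



lemma nc: "cmod (complex_of_real r * cis a) = \<bar>r\<bar>"
  by (simp only: norm_mult norm_of_real norm_cis mult_1_right)

definition "J t = (LINT u:{0..<1}|lborel. complex_of_real (2 - F u) * cis (u * t))"

lemma setint_01:
  fixes h :: "real \<Rightarrow> complex"
  assumes [measurable]: "h \<in> borel_measurable borel" and "\<And>u. norm (h u) \<le> B"
  shows "set_integrable lborel {0..<1::real} h"
  unfolding set_integrable_def
  by (rule integrableI_bounded_set_indicator[where B=B]) (use assms(2) in auto)

lemma J_eq:
  assumes t: "t \<noteq> 0"
  shows "J t = (cis t - 2 + minkowski_fourier t) / (\<i> * of_real t)"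
proof -
  have i1: "set_integrable lborel {0..<1::real} (\<lambda>u. cis (u * t))"
    by (rule setint_01[where B=1]) auto
  have i2: "set_integrable lborel {0..<1::real} (\<lambda>u. complex_of_real (1 - F u) * cis (u * t))"
  proof (rule setint_01[where B=1])
    show "norm (complex_of_real (1 - F u) * cis (u * t)) \<le> 1" for u
      unfolding nc using cdf_bounds[of u] by simp
  qed measurable
  have "J t = (LINT u:{0..<1}|lborel. cis (u * t) + complex_of_real (1 - F u) * cis (u * t))"
    unfolding J_def by (intro set_lebesgue_integral_cong) (auto simp: algebra_simps)
  also have "\<dots> = (LINT u:{0..<1}|lborel. cis (u * t)) + (LINT u:{0..<1}|lborel. complex_of_real (1 - F u) * cis (u * t))"
    by (rule set_integral_add[OF i1 i2])
  also have "\<dots> = (cis (1 * t) - 1) / (\<i> * of_real t) + (minkowski_fourier t - 1) / (\<i> * of_real t)"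
    using ftc_cis[OF t, of 1] fub[OF t] by simp
  finally show ?thesis by (simp add: add_divide_distrib[symmetric])
qed

lemma G:
  assumes "0 \<le> u" "u < 1"
  shows "minkowski_inv (real n + u) = (1/2)^n * (2 - minkowski01 u)"
proof (cases "n = 0")
  case True
  show ?thesis
  proof (cases "u = 0")
    case True
    then show ?thesis using \<open>n = 0\<close> by (simp add: minkowski_inv_def)
  next
    case False
    then have "1 < 1 / u" using assms by simp
    then show ?thesis using \<open>n = 0\<close> False assms by (simp add: minkowski_inv_def minkowski_def)
  qed
next
  case False
  then have n: "n \<ge> 1" by simp
  have "1 / (real n + u) \<le> 1" using n assms by simp
  moreover have "real n + u \<noteq> 0" using n assms by simp
  ultimately show ?thesis using key[OF n assms] by (simp add: minkowski_inv_def minkowski_def)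
qed

definition "hh t n x = indicator {real n..<real n + 1} x *\<^sub>R
   (complex_of_real ((1/2)^n * (2 - F (x - real n))) * cis (x * t))"

lemma hh_sum:
  "(\<lambda>n. hh t n x) sums (indicator {0..} x *\<^sub>R (complex_of_real (minkowski_inv x) * cis (x * t)))"
proof (cases "0 \<le> x")
  case False
  then have "(\<lambda>n. hh t n x) = (\<lambda>n. 0)" by (auto simp: hh_def fun_eq_iff indicator_def)
  then show ?thesis using False by simp
next
  case True
  define N where "N = nat \<lfloor>x\<rfloor>"
  have N: "real N \<le> x" "x < real N + 1" using True unfolding N_def by linarith+
  have ind: "indicator {real n..<real n + 1} x = (if n = N then 1 else (0::real))" for n
  proof -
    have "real n \<le> x \<and> x < real n + 1 \<longleftrightarrow> n = N"
    proof
      assume "real n \<le> x \<and> x < real n + 1"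
      then have "\<lfloor>x\<rfloor> = int n" by (simp add: floor_eq_iff)
      then show "n = N" unfolding N_def by simp
    qed (use N in auto)
    then show ?thesis by (auto simp: indicator_def)
  qed
  have "(\<lambda>n. hh t n x) = (\<lambda>n. if n = N then hh t N x else 0)"
    by (auto simp: hh_def ind fun_eq_iff)
  moreover have "hh t N x = indicator {0..} x *\<^sub>R (complex_of_real (minkowski_inv x) * cis (x * t))"
  proof -
    have u: "0 \<le> x - real N" "x - real N < 1" using N by auto
    have "minkowski_inv x = minkowski_inv (real N + (x - real N))" by simp
    also have "\<dots> = (1/2)^N * (2 - minkowski01 (x - real N))" using G[OF u] .
    finally show ?thesis using True u cdf_eq[of "x - real N"] by (simp add: hh_def ind)
  qed
  ultimately show ?thesis using sums_single[of N "\<lambda>_. hh t N x"] by simp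
qed

lemma hh_meas[measurable]: "hh t n \<in> borel_measurable borel"
  unfolding hh_def by measurable

lemma hh_int: "integrable lborel (hh t n)"
  unfolding hh_def
proof (rule integrableI_bounded_set_indicator[where B=2])
  show "AE x in lborel. x \<in> {real n..<real n + 1} \<longrightarrow>
      norm (complex_of_real ((1/2)^n * (2 - F (x - real n))) * cis (x * t)) \<le> 2"
  proof (intro AE_I2 impI)
    fix x
    have "(1/2::real)^n \<le> 1" by (simp add: power_le_one)
    moreover have "0 \<le> 2 - F (x - real n)" "2 - F (x - real n) \<le> 2" using cdf_bounds[of "x - real n"] by auto
    ultimately have "(1/2::real)^n * (2 - F (x - real n)) \<le> 1 * 2" by (intro mult_mono) auto
    then show "norm (complex_of_real ((1/2)^n * (2 - F (x - real n))) * cis (x * t)) \<le> 2"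
      unfolding nc using \<open>0 \<le> 2 - F (x - real n)\<close> by (simp add: abs_mult)
  qed
qed auto

lemma hh_norm_int: "(\<integral>x. norm (hh t n x) \<partial>lborel) \<le> 2 * (1/2)^n"
proof -
  have "(\<integral>x. norm (hh t n x) \<partial>lborel) \<le> (\<integral>x. indicator {real n..<real n + 1} x * (2 * (1/2)^n) \<partial>lborel)"
  proof (rule integral_mono)
    show "integrable lborel (\<lambda>x. norm (hh t n x))" using hh_int by (rule integrable_norm)
    show "integrable lborel (\<lambda>x. indicator {real n..<real n + 1} x * (2 * (1/2::real)^n))"
      by (intro integrable_mult_left integrable_real_indicator) auto
    fix x
    have "0 \<le> 2 - F (x - real n)" "2 - F (x - real n) \<le> 2" using cdf_bounds[of "x - real n"] by auto
    then show "norm (hh t n x) \<le> indicator {real n..<real n + 1} x * (2 * (1/2)^n)"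
      unfolding hh_def norm_scaleR nc by (auto simp: indicator_def abs_mult mult_left_mono)
  qed
  also have "\<dots> = 2 * (1/2)^n" by simp
  finally show ?thesis .
qed

lemma hh_integral: "integral\<^sup>L lborel (hh t n) = (cis t / 2)^n * J t"
proof -
  have "integral\<^sup>L lborel (hh t n) = \<bar>1\<bar> *\<^sub>R (\<integral>u. hh t n (real n + 1 * u) \<partial>lborel)"
    by (rule lborel_integral_real_affine) simp
  also have "(\<lambda>u. hh t n (real n + 1 * u)) =
      (\<lambda>u. (cis t / 2)^n * (indicator {0..<1} u *\<^sub>R (complex_of_real (2 - F u) * cis (u * t))))"
  proof
    fix u
    have "cis t ^ n = cis (real n * t)" by (rule Complex.DeMoivre)
    then have "(cis t / 2)^n = complex_of_real ((1/2)^n) * cis (real n * t)"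
      by (simp add: power_divide)
    moreover have "cis ((real n + u) * t) = cis (real n * t) * cis (u * t)"
      by (simp add: cis_mult distrib_right)
    moreover have "indicator {real n..<real n + 1} (real n + u) = (indicator {0..<1} u :: real)"
      by (auto simp: indicator_def)
    ultimately show "hh t n (real n + 1 * u) = (cis t / 2)^n * (indicator {0..<1} u *\<^sub>R (complex_of_real (2 - F u) * cis (u * t)))"
      by (simp add: hh_def scaleR_conv_of_real)
  qed
  finally show ?thesis unfolding J_def set_lebesgue_integral_def by (simp only: integral_mult_right_zero abs_one scaleR_one)
qed

lemma C_eq:
  shows "set_integrable lborel {0..} (\<lambda>x. complex_of_real (minkowski_inv x) * cis (x * t))"
    and "(LINT x:{0..}|lborel. complex_of_real (minkowski_inv x) * cis (x * t)) = J t / (1 - cis t / 2)"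
proof -
  have s: "summable (\<lambda>n. \<integral>x. norm (hh t n x) \<partial>lborel)"
  proof (rule summable_comparison_test)
    show "\<exists>N. \<forall>n\<ge>N. norm (\<integral>x. norm (hh t n x) \<partial>lborel) \<le> 2 * (1/2)^n"
      using hh_norm_int by (auto simp: integral_nonneg_AE)
    show "summable (\<lambda>n. 2 * (1/2::real)^n)" by (intro summable_mult summable_geometric) auto
  qed
  have ae: "AE x in lborel. summable (\<lambda>n. norm (hh t n x))"
  proof (intro AE_I2)
    fix x
    have "(\<lambda>n. hh t n x) sums (indicator {0..} x *\<^sub>R (complex_of_real (minkowski_inv x) * cis (x * t)))"
      by (rule hh_sum)
    have "finite {nat \<lfloor>x\<rfloor>}" by simp
    moreover have "norm (hh t n x) = 0" if "n \<notin> {nat \<lfloor>x\<rfloor>}" for n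
    proof -
      have "\<not> (real n \<le> x \<and> x < real n + 1)"
      proof
        assume "real n \<le> x \<and> x < real n + 1"
        then have "\<lfloor>x\<rfloor> = int n" by (simp add: floor_eq_iff)
        then show False using that by simp
      qed
      then show ?thesis by (simp add: hh_def indicator_def)
    qed
    ultimately show "summable (\<lambda>n. norm (hh t n x))" by (rule summable_finite) 
  qed
  have eq: "(\<lambda>x. \<Sum>n. hh t n x) = (\<lambda>x. indicator {0..} x *\<^sub>R (complex_of_real (minkowski_inv x) * cis (x * t)))"
    using hh_sum by (auto simp: fun_eq_iff sums_iff)
  show "set_integrable lborel {0..} (\<lambda>x. complex_of_real (minkowski_inv x) * cis (x * t))"
    unfolding set_integrable_def eq[symmetric] by (rule integrable_suminf[OF hh_int ae s])
  have "(LINT x:{0..}|lborel. complex_of_real (minkowski_inv x) * cis (x * t)) = (\<Sum>n. integral\<^sup>L lborel (hh t n))"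
    unfolding set_lebesgue_integral_def eq[symmetric] by (rule integral_suminf[OF hh_int ae s])
  also have "\<dots> = (\<Sum>n. (cis t / 2)^n * J t)" unfolding hh_integral ..
  also have "\<dots> = 1 / (1 - cis t / 2) * J t"
  proof (rule sums_unique[symmetric], rule sums_mult2, rule geometric_sums)
    show "norm (cis t / 2) < 1" by (simp add: norm_divide)
  qed
  finally show "(LINT x:{0..}|lborel. complex_of_real (minkowski_inv x) * cis (x * t)) = J t / (1 - cis t / 2)"
    by simp
qed



definition "CC t = (LINT x:{0..}|lborel. complex_of_real (minkowski_inv x) * cis (x * t))"

lemma re_im_C:
  shows "(LBINT x:{0<..}. minkowski_inv x * sin (x * t)) = Im (CC t)"
    and "(LBINT x:{0<..}. minkowski_inv x * cos (x * t)) = Re (CC t)"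
proof -
  define f where "f x = indicator {0..} x *\<^sub>R (complex_of_real (minkowski_inv x) * cis (x * t))" for x
  have int: "integrable lborel f" using C_eq(1)[of t] unfolding f_def set_integrable_def .
  have CC: "CC t = integral\<^sup>L lborel f" unfolding CC_def f_def set_lebesgue_integral_def ..
  have ae: "AE x in lborel. x \<noteq> (0::real)" by (rule AE_lborel_singleton)
  have "integral\<^sup>L lborel (\<lambda>x. Im (f x)) = Im (integral\<^sup>L lborel f)"
    by (rule integral_bounded_linear[OF bounded_linear_Im int])
  moreover have "(LBINT x:{0<..}. minkowski_inv x * sin (x * t)) = integral\<^sup>L lborel (\<lambda>x. Im (f x))"
    unfolding set_lebesgue_integral_def
  proof (rule integral_cong_AE)
    have m: "(\<lambda>x. Im (f x)) \<in> borel_measurable lborel" using integrable_Im[OF int] by auto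
    show "(\<lambda>x. Im (f x)) \<in> borel_measurable lborel" by (rule m)
    have "(\<lambda>x. indicator {0<..} x *\<^sub>R (minkowski_inv x * sin (x * t))) = (\<lambda>x. indicator {0<..} x * Im (f x))"
      by (auto simp: fun_eq_iff f_def indicator_def)
    moreover have "(\<lambda>x. indicator {0<..} x * Im (f x)) \<in> borel_measurable lborel"
      using m by measurable
    ultimately show "(\<lambda>x. indicator {0<..} x *\<^sub>R (minkowski_inv x * sin (x * t))) \<in> borel_measurable lborel"
      by simp
    show "AE x in lborel. indicator {0<..} x *\<^sub>R (minkowski_inv x * sin (x * t)) = Im (f x)"
      using ae by eventually_elim (auto simp: f_def indicator_def)
  qed
  ultimately show "(LBINT x:{0<..}. minkowski_inv x * sin (x * t)) = Im (CC t)" unfolding CC by simp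
  have "integral\<^sup>L lborel (\<lambda>x. Re (f x)) = Re (integral\<^sup>L lborel f)"
    by (rule integral_bounded_linear[OF bounded_linear_Re int])
  moreover have "(LBINT x:{0<..}. minkowski_inv x * cos (x * t)) = integral\<^sup>L lborel (\<lambda>x. Re (f x))"
    unfolding set_lebesgue_integral_def
  proof (rule integral_cong_AE)
    have m: "(\<lambda>x. Re (f x)) \<in> borel_measurable lborel" using integrable_Re[OF int] by auto
    show "(\<lambda>x. Re (f x)) \<in> borel_measurable lborel" by (rule m)
    have "(\<lambda>x. indicator {0<..} x *\<^sub>R (minkowski_inv x * cos (x * t))) = (\<lambda>x. indicator {0<..} x * Re (f x))"
      by (auto simp: fun_eq_iff f_def indicator_def)
    moreover have "(\<lambda>x. indicator {0<..} x * Re (f x)) \<in> borel_measurable lborel"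
      using m by measurable
    ultimately show "(\<lambda>x. indicator {0<..} x *\<^sub>R (minkowski_inv x * cos (x * t))) \<in> borel_measurable lborel"
      by simp
    show "AE x in lborel. indicator {0<..} x *\<^sub>R (minkowski_inv x * cos (x * t)) = Re (f x)"
      using ae by eventually_elim (auto simp: f_def indicator_def)
  qed
  ultimately show "(LBINT x:{0<..}. minkowski_inv x * cos (x * t)) = Re (CC t)" unfolding CC by simp
qed

definition "w t = 1 - cis t / 2"

lemma w_bounds: "1/2 \<le> norm (w t)" "norm (w t) \<le> 3/2" "w t \<noteq> 0"
proof -
  have n: "norm (cis t / 2) = 1/2" by (simp add: norm_divide)
  show "1/2 \<le> norm (w t)" using norm_triangle_ineq2[of 1 "cis t / 2"] n by (simp add: w_def)
  show "norm (w t) \<le> 3/2" using norm_triangle_ineq4[of 1 "cis t / 2"] n by (simp add: w_def)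
  then show "w t \<noteq> 0" using \<open>1/2 \<le> norm (w t)\<close> by auto
qed

definition "Phi t = minkowski_fourier t / w t"

lemma aux: fixes a w :: complex assumes "w \<noteq> 0" shows "(a - 2 * w) / (\<i> * w) = 2 * \<i> - \<i> * (a / w)"
  using assms by (simp add: field_simps divide_simps)

lemma tC:
  assumes t: "t \<noteq> 0"
  shows "complex_of_real t * CC t = 2 * \<i> - \<i> * Phi t"
proof -
  have w: "w t \<noteq> 0" by (rule w_bounds)
  have "CC t = J t / w t" unfolding CC_def w_def by (rule C_eq(2))
  also have "\<dots> = (cis t - 2 + minkowski_fourier t) / (\<i> * of_real t) / w t" using J_eq[OF t] by simp
  finally have eq: "CC t = (cis t - 2 + minkowski_fourier t) / (\<i> * of_real t) / w t" .
  have t': "complex_of_real t \<noteq> 0" using t by simp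
  have "complex_of_real t * CC t = (cis t - 2 + minkowski_fourier t) / (\<i> * w t)"
    unfolding eq using t' w by (simp add: field_simps)
  also have "cis t - 2 + minkowski_fourier t = minkowski_fourier t - 2 * w t" by (simp add: w_def algebra_simps)
  also have "(minkowski_fourier t - 2 * w t) / (\<i> * w t) = 2 * \<i> - \<i> * Phi t"
    unfolding Phi_def by (rule aux[OF w])
  finally show ?thesis .
qed

lemma AB:
  assumes t: "t \<noteq> 0"
  shows "t * (LBINT x:{0<..}. minkowski_inv x * sin (x * t)) = 2 - Re (Phi t)"
    and "t * (LBINT x:{0<..}. minkowski_inv x * cos (x * t)) = Im (Phi t)"
proof -
  have "Im (complex_of_real t * CC t) = 2 - Re (Phi t)" "Re (complex_of_real t * CC t) = Im (Phi t)"
    unfolding tC[OF t] by simp_all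
  then show "t * (LBINT x:{0<..}. minkowski_inv x * sin (x * t)) = 2 - Re (Phi t)"
    and "t * (LBINT x:{0<..}. minkowski_inv x * cos (x * t)) = Im (Phi t)"
    unfolding re_im_C by simp_all
qed

lemma fourier_neg: "minkowski_fourier (- t) = cnj (minkowski_fourier t)"
proof -
  have "minkowski_fourier (- t) = (\<integral>x. cnj (indicator {0..1} x *\<^sub>R cis (x * t)) \<partial>\<mu>)"
    unfolding minkowski_fourier_def set_lebesgue_integral_def
    by (intro Bochner_Integration.integral_cong) (auto simp: cis_cnj)
  also have "\<dots> = cnj (minkowski_fourier t)"
    unfolding minkowski_fourier_def set_lebesgue_integral_def by (rule Bochner_Integration.integral_cnj)
  finally show ?thesis .
qed

theorem corollary3:
  shows "(minkowski_fourier \<longlongrightarrow> 0) at_infinity \<longleftrightarrow>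
     (((\<lambda>t. t * (LBINT x:{0<..}. minkowski_inv x * sin (x * t))) \<longlongrightarrow> 2) at_top \<and>
      ((\<lambda>t. t * (LBINT x:{0<..}. minkowski_inv x * cos (x * t))) \<longlongrightarrow> 0) at_top)"
proof -
  have ev: "\<forall>\<^sub>F t in at_top. (t::real) \<noteq> 0"
    using eventually_gt_at_top[of 0] by eventually_elim auto
  have s1: "((\<lambda>t. t * (LBINT x:{0<..}. minkowski_inv x * sin (x * t))) \<longlongrightarrow> 2) at_top \<longleftrightarrow>
      ((\<lambda>t. 2 - Re (Phi t)) \<longlongrightarrow> 2) at_top"
    by (rule tendsto_cong) (use ev in \<open>eventually_elim, simp add: AB\<close>)
  have s2: "((\<lambda>t. t * (LBINT x:{0<..}. minkowski_inv x * cos (x * t))) \<longlongrightarrow> 0) at_top \<longleftrightarrow>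
      ((\<lambda>t. Im (Phi t)) \<longlongrightarrow> 0) at_top"
    by (rule tendsto_cong) (use ev in \<open>eventually_elim, simp add: AB\<close>)
  have s3: "((\<lambda>t. 2 - Re (Phi t)) \<longlongrightarrow> 2) at_top \<longleftrightarrow> ((\<lambda>t. Re (Phi t)) \<longlongrightarrow> 0) at_top"
  proof
    assume "((\<lambda>t. 2 - Re (Phi t)) \<longlongrightarrow> 2) at_top"
    from tendsto_diff[OF tendsto_const[of 2] this] show "((\<lambda>t. Re (Phi t)) \<longlongrightarrow> 0) at_top" by simp
  next
    assume "((\<lambda>t. Re (Phi t)) \<longlongrightarrow> 0) at_top"
    from tendsto_diff[OF tendsto_const[of 2] this] show "((\<lambda>t. 2 - Re (Phi t)) \<longlongrightarrow> 2) at_top" by simp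
  qed
  have s4: "(Phi \<longlongrightarrow> 0) at_top \<longleftrightarrow> (minkowski_fourier \<longlongrightarrow> 0) at_top"
  proof
    assume "(Phi \<longlongrightarrow> 0) at_top"
    then show "(minkowski_fourier \<longlongrightarrow> 0) at_top"
    proof (rule tendsto_0_le[where K="3/2"])
      show "\<forall>\<^sub>F x in at_top. norm (minkowski_fourier x) \<le> norm (Phi x) * (3/2)"
      proof (intro always_eventually allI)
        fix x
        have "minkowski_fourier x = Phi x * w x" using w_bounds(3)[of x] by (simp add: Phi_def)
        then have "norm (minkowski_fourier x) = norm (Phi x) * norm (w x)" by (simp add: norm_mult)
        also have "\<dots> \<le> norm (Phi x) * (3/2)" using w_bounds(2)[of x] by (intro mult_left_mono) auto
        finally show "norm (minkowski_fourier x) \<le> norm (Phi x) * (3/2)" .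
      qed
    qed
  next
    assume "(minkowski_fourier \<longlongrightarrow> 0) at_top"
    then show "(Phi \<longlongrightarrow> 0) at_top"
    proof (rule tendsto_0_le[where K="2"])
      show "\<forall>\<^sub>F x in at_top. norm (Phi x) \<le> norm (minkowski_fourier x) * 2"
      proof (intro always_eventually allI)
        fix x
        have "norm (Phi x) = norm (minkowski_fourier x) / norm (w x)" by (simp add: Phi_def norm_divide)
        also have "\<dots> \<le> norm (minkowski_fourier x) / (1/2)"
          using w_bounds(1)[of x] by (intro divide_left_mono) auto
        finally show "norm (Phi x) \<le> norm (minkowski_fourier x) * 2" by simp
      qed
    qed
  qed
  have s5: "(minkowski_fourier \<longlongrightarrow> 0) at_infinity \<longleftrightarrow> (minkowski_fourier \<longlongrightarrow> 0) at_top"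
  proof
    assume "(minkowski_fourier \<longlongrightarrow> 0) at_infinity"
    then show "(minkowski_fourier \<longlongrightarrow> 0) at_top" using at_top_le_at_infinity by (rule tendsto_mono[rotated])
  next
    assume a: "(minkowski_fourier \<longlongrightarrow> 0) at_top"
    have "((\<lambda>t. minkowski_fourier (- t)) \<longlongrightarrow> 0) at_top"
      using tendsto_cnj[OF a] by (simp add: fourier_neg)
    then have b: "(minkowski_fourier \<longlongrightarrow> 0) at_bot"
      unfolding at_bot_mirror filterlim_filtermap by simp
    show "(minkowski_fourier \<longlongrightarrow> 0) at_infinity"
      unfolding at_infinity_eq_at_top_bot by (rule filterlim_sup[OF a b])
  qed
  show ?thesis
    unfolding s1 s2 s3 s5 s4[symmetric] tendsto_complex_iff[of Phi] by simp
qed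

end
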